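(* Let $u\le v$ in Bruhat order on $S_m$ and $1\le i\le m$. Then: (1) $w\mapsto\epsilon_i(w)$ is a poset isomorphism from the Bruhat interval $[u,v]$ onto $[\epsilon_i(u),\epsilon_i(v)]$; (2) $[\epsilon_i(u),\epsilon_{i+1}(v)]=[\epsilon_i(u),\epsilon_i(v)]\sqcup[\epsilon_{i+1}(u),\epsilon_{i+1}(v)]$, and for $w,w'\in[u,v]$ and $j,k\in\{i,i+1\}$ we have $\epsilon_j(w)\le\epsilon_k(w')$ if and only if $w\le w'$ and $j\le k$.
   Context: For $w\in S_m$ and $1\le i\le m+1$, $\epsilon_i(w)\in S_{m+1}$ is defined by $\epsilon_i(w)(j)=w(j)+1$ for $j<i$, $\epsilon_i(w)(i)=1$, $\epsilon_i(w)(j)=w(j-1)+1$ for $j>i$. Bruhat intervals $[a,b]=\{w: a\le w\le b\}$ in Bruhat order. *)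

theory Defs
  imports "HOL-Combinatorics.Permutations"
begin

text \<open>Permutations in S_m are functions nat \<Rightarrow> nat permuting {1..m} (identity elsewhere).\<close>

definition inv_count :: "nat \<Rightarrow> (nat \<Rightarrow> nat) \<Rightarrow> nat" where
  "inv_count m w = card {(a, b). 1 \<le> a \<and> a < b \<and> b \<le> m \<and> w b < w a}"

definition bruhat_step :: "nat \<Rightarrow> (nat \<Rightarrow> nat) \<Rightarrow> (nat \<Rightarrow> nat) \<Rightarrow> bool" where
  "bruhat_step m w w' \<longleftrightarrow>
     (\<exists>a b. 1 \<le> a \<and> a < b \<and> b \<le> m \<and> w' = w \<circ> Transposition.transpose a b
            \<and> inv_count m w < inv_count m w')"

definition bruhat_le :: "nat \<Rightarrow> (nat \<Rightarrow> nat) \<Rightarrow> (nat \<Rightarrow> nat) \<Rightarrow> bool" where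
  "bruhat_le m u v \<longleftrightarrow> u permutes {1..m} \<and> v permutes {1..m} \<and> (bruhat_step m)\<^sup>*\<^sup>* u v"

definition bruhat_interval :: "nat \<Rightarrow> (nat \<Rightarrow> nat) \<Rightarrow> (nat \<Rightarrow> nat) \<Rightarrow> (nat \<Rightarrow> nat) set" where
  "bruhat_interval m a b = {w. bruhat_le m a w \<and> bruhat_le m w b}"

definition eps :: "nat \<Rightarrow> nat \<Rightarrow> (nat \<Rightarrow> nat) \<Rightarrow> (nat \<Rightarrow> nat)" where
  "eps m i w = (\<lambda>j. if j = 0 \<or> m + 1 < j then j
                    else if j < i then w j + 1
                    else if j = i then 1
                    else w (j - 1) + 1)"

end

theory Submission
  imports Defs
begin

definition invset :: "nat \<Rightarrow> (nat \<Rightarrow> nat) \<Rightarrow> (nat \<times> nat) set" where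
  "invset m w = {(a, b). 1 \<le> a \<and> a < b \<and> b \<le> m \<and> w b < w a}"

lemma inv_count_invset: "inv_count m w = card (invset m w)"
  by (simp add: inv_count_def invset_def)

lemma finite_invset: "finite (invset m w)"
  by (rule finite_subset[of _ "{1..m} \<times> {1..m}"]) (auto simp: invset_def)

definition hmap :: "nat \<Rightarrow> nat \<Rightarrow> nat \<times> nat \<Rightarrow> nat \<times> nat" where
  "hmap a b z = (case z of (p, q) \<Rightarrow>
     if p < a \<and> (q = a \<or> q = b) then (p, Transposition.transpose a b q)
     else if b < q \<and> (p = a \<or> p = b) then (Transposition.transpose a b p, q) else (p, q))"

lemma hmap_invol: "a < b \<Longrightarrow> hmap a b (hmap a b z) = z"
  by (cases z) (auto simp: hmap_def transpose_def)

lemma inv_decrease: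
  assumes ab: "1 \<le> a" "a < b" "b \<le> m" and xb: "x b < x a"
  shows "inv_count m (x \<circ> Transposition.transpose a b) < inv_count m x"
proof -
  let ?y = "x \<circ> Transposition.transpose a b"
  have inj: "inj_on (hmap a b) (invset m ?y)"
    by (metis hmap_invol[OF ab(2)] inj_onI)
  have sub: "hmap a b ` invset m ?y \<subseteq> invset m x - {(a,b)}"
  proof
    fix z assume "z \<in> hmap a b ` invset m ?y"
    then obtain p q where pq: "(p,q) \<in> invset m ?y" and z: "z = hmap a b (p,q)" by auto
    from pq have pq': "1 \<le> p" "p < q" "q \<le> m" "x (Transposition.transpose a b q) < x (Transposition.transpose a b p)"
      by (auto simp: invset_def)
    have "z \<noteq> (a,b)"
    proof
      assume "z = (a,b)"
      then have "(p,q) = hmap a b (a,b)" using z hmap_invol[OF ab(2), of "(p,q)"] by simp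
      then have "(p,q) = (a,b)" by (simp add: hmap_def)
      with pq' xb show False by simp
    qed
    moreover have "z \<in> invset m x"
      using pq' ab xb unfolding z hmap_def invset_def transpose_def
      by (auto split: if_splits)
    ultimately show "z \<in> invset m x - {(a,b)}" by simp
  qed
  have ab_in: "(a,b) \<in> invset m x" using ab xb by (simp add: invset_def)
  have "card (invset m ?y) = card (hmap a b ` invset m ?y)" using inj by (simp add: card_image)
  also have "\<dots> \<le> card (invset m x - {(a,b)})"
    by (rule card_mono) (use finite_invset sub in auto)
  also have "\<dots> < card (invset m x)"
    by (rule card_Diff1_less[OF finite_invset ab_in])
  finally show ?thesis by (simp add: inv_count_invset)
qed

definition stp :: "nat \<Rightarrow> (nat \<Rightarrow> nat) \<Rightarrow> (nat \<Rightarrow> nat) \<Rightarrow> bool" where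
  "stp m w w' \<longleftrightarrow> (\<exists>a b. 1 \<le> a \<and> a < b \<and> b \<le> m \<and> w' = w \<circ> Transposition.transpose a b \<and> w a < w b)"

lemma bruhat_step_stp: "bruhat_step m = stp m"
proof (intro ext iffI)
  fix w w' assume "bruhat_step m w w'"
  then obtain a b where ab: "1 \<le> a" "a < b" "b \<le> m" "w' = w \<circ> Transposition.transpose a b"
    and lt: "inv_count m w < inv_count m w'" by (auto simp: bruhat_step_def)
  have "w a < w b"
  proof (rule ccontr)
    assume "\<not> w a < w b"
    then consider "w b < w a" | "w a = w b" by linarith
    then show False
    proof cases
      case 1 then show False using inv_decrease[OF ab(1-3), of w] lt ab(4) by simp
    next
      case 2 then have "w' = w" using ab(4) by (auto simp: fun_eq_iff transpose_def)
      then show False using lt by simp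
    qed
  qed
  then show "stp m w w'" using ab by (auto simp: stp_def)
next
  fix w w' assume "stp m w w'"
  then obtain a b where ab: "1 \<le> a" "a < b" "b \<le> m" "w' = w \<circ> Transposition.transpose a b"
    and lt: "w a < w b" by (auto simp: stp_def)
  have "w = w' \<circ> Transposition.transpose a b" using ab(4) by (auto simp: fun_eq_iff)
  moreover have "w' b < w' a" using ab lt by simp
  ultimately have "inv_count m w < inv_count m w'" using inv_decrease[OF ab(1-3), of w'] by simp
  then show "bruhat_step m w w'" using ab by (auto simp: bruhat_step_def)
qed

lemma bruhat_le_stp: "bruhat_le m u v \<longleftrightarrow> u permutes {1..m} \<and> v permutes {1..m} \<and> (stp m)\<^sup>*\<^sup>* u v"
  by (simp add: bruhat_le_def bruhat_step_stp)

lemma stp_perm: "stp m w w' \<Longrightarrow> w permutes {1..m} \<Longrightarrow> w' permutes {1..m}"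
  unfolding stp_def by (auto intro!: permutes_compose permutes_swap_id)

lemma stps_perm: "(stp m)\<^sup>*\<^sup>* w w' \<Longrightarrow> w permutes {1..m} \<Longrightarrow> w' permutes {1..m}"
  by (induction rule: rtranclp_induct) (simp, metis stp_perm)

lemma perm_zero: "(w::nat\<Rightarrow>nat) permutes {1..m} \<Longrightarrow> w x = 0 \<longleftrightarrow> x = 0"
  by (metis atLeastAtMost_iff not_one_le_zero permutes_in_image permutes_not_in)

lemma perm_pos: "(w::nat\<Rightarrow>nat) permutes {1..m} \<Longrightarrow> 1 \<le> x \<Longrightarrow> 1 \<le> w x"
  using perm_zero[of w m x] by auto

lemma pos_forward:
  assumes "(stp n)\<^sup>*\<^sup>* x y" "x permutes {1..n}" "x d = 1"
  shows "\<exists>d'\<ge>d. y d' = 1"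
  using assms(1)
proof (induction rule: rtranclp_induct)
  case base then show ?case using assms by auto
next
  case (step y z)
  then obtain d'' where d'': "d'' \<ge> d" "y d'' = 1" by auto
  have yp: "y permutes {1..n}" using stps_perm step(1) assms(2) by blast
  from step(2) obtain a b where ab: "1 \<le> a" "a < b" "b \<le> n" "z = y \<circ> Transposition.transpose a b"
    and lt: "y a < y b" by (auto simp: stp_def)
  have "1 \<le> y a" using perm_pos[OF yp ab(1)] .
  show ?case
  proof (cases "d'' = a")
    case True then show ?thesis using ab d'' by (intro exI[of _ b]) auto
  next
    case False
    then have "d'' \<noteq> b" using d'' lt \<open>1 \<le> y a\<close> by auto
    then show ?thesis using False ab d'' by (intro exI[of _ d'']) auto
  qed
qed

definition sh :: "nat \<Rightarrow> nat \<Rightarrow> nat" where "sh i p = (if p < i then p else p + 1)"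
definition unsh :: "nat \<Rightarrow> nat \<Rightarrow> nat" where "unsh i p = (if p < i then p else p - 1)"

lemma perm_range: "(w::nat\<Rightarrow>nat) permutes {1..m} \<Longrightarrow> 1 \<le> p \<Longrightarrow> p \<le> m \<Longrightarrow> 1 \<le> w p \<and> w p \<le> m"
  using permutes_in_image[of w "{1..m}" p] by auto

lemma eps_one:
  assumes "1 \<le> j" "j \<le> m + 1" "w permutes {1..m}"
  shows "eps m j w k = 1 \<longleftrightarrow> k = j"
  using assms perm_zero[OF assms(3)] by (auto simp: eps_def)

lemma eps_unsh: "p \<in> {1..m+1} \<Longrightarrow> p \<noteq> j \<Longrightarrow> eps m j w p = w (unsh j p) + 1"
  by (auto simp: eps_def unsh_def)

lemma eps_perm:
  assumes j: "1 \<le> j" "j \<le> m + 1" and w: "w permutes {1..m}"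
  shows "eps m j w permutes {1..m+1}"
proof (rule inj_imp_permutes)
  have iw: "inj w" using permutes_inj[OF w] .
  show "inj_on (eps m j w) {1..m+1}"
  proof (rule inj_onI)
    fix p q assume pq: "p \<in> {1..m+1}" "q \<in> {1..m+1}" "eps m j w p = eps m j w q"
    show "p = q"
    proof (cases "p = j \<or> q = j")
      case True
      then show ?thesis using pq eps_one[OF j w] by metis
    next
      case False
      then have "w (unsh j p) = w (unsh j q)" using pq eps_unsh[of p m j w] eps_unsh[of q m j w] by simp
      then have "unsh j p = unsh j q" using injD[OF iw] by blast
      then show ?thesis using False pq by (auto simp: unsh_def split: if_splits)
    qed
  qed
  show "eps m j w x \<in> {1..m+1}" if x: "x \<in> {1..m+1}" for x
  proof -
    consider "x < j" | "x = j" | "x > j" by linarith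
    then show ?thesis
    proof cases
      case 1
      then have "1 \<le> w x \<and> w x \<le> m" using perm_range[OF w, of x] x j by auto
      then show ?thesis using 1 x by (simp add: eps_def)
    next
      case 2 then show ?thesis using x by (simp add: eps_def)
    next
      case 3
      then have "1 \<le> w (x-1) \<and> w (x-1) \<le> m" using perm_range[OF w, of "x-1"] x j by auto
      then show ?thesis using 3 x by (simp add: eps_def)
    qed
  qed
  show "\<And>x. x \<notin> {1..m+1} \<Longrightarrow> eps m j w x = x" by (auto simp: eps_def)
qed auto

lemma eps_transpose:
  assumes "1 \<le> a" "a < b" "b \<le> m" "1 \<le> i" "i \<le> m + 1"
  shows "eps m i (w \<circ> Transposition.transpose a b) = eps m i w \<circ> Transposition.transpose (sh i a) (sh i b)"
  using assms by (auto simp: fun_eq_iff eps_def transpose_def sh_def)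

lemma eps_sh: "1 \<le> a \<Longrightarrow> a \<le> m \<Longrightarrow> eps m i w (sh i a) = w a + 1"
  by (auto simp: eps_def sh_def)

lemma lift_stp:
  assumes "stp m w w'" "1 \<le> i" "i \<le> m + 1"
  shows "stp (m+1) (eps m i w) (eps m i w')"
proof -
  from assms(1) obtain a b where ab: "1 \<le> a" "a < b" "b \<le> m" "w' = w \<circ> Transposition.transpose a b"
    and lt: "w a < w b" by (auto simp: stp_def)
  show ?thesis unfolding stp_def
    apply (rule exI[of _ "sh i a"], rule exI[of _ "sh i b"])
    using ab lt eps_transpose[OF ab(1-3) assms(2,3), of w] eps_sh[of a m i w] eps_sh[of b m i w]
    by (auto simp: sh_def)
qed

lemma lift_stps:
  assumes "(stp m)\<^sup>*\<^sup>* w w'" "1 \<le> i" "i \<le> m + 1"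
  shows "(stp (m+1))\<^sup>*\<^sup>* (eps m i w) (eps m i w')"
  using assms(1)
  proof (induction rule: rtranclp_induct)
  case (step y z)
  show ?case
    by (rule rtranclp.rtrancl_into_rtrancl[of "stp (m+1)", OF step.IH lift_stp[OF step(2) assms(2,3)]])
qed simp

lemma eps_next: "1 \<le> i \<Longrightarrow> i \<le> m \<Longrightarrow> eps m (i+1) w = eps m i w \<circ> Transposition.transpose i (i+1)"
  by (auto simp: fun_eq_iff eps_def transpose_def)

lemma stp_next:
  assumes "1 \<le> i" "i \<le> m" "w permutes {1..m}"
  shows "stp (m+1) (eps m i w) (eps m (i+1) w)"
  unfolding stp_def
  apply (rule exI[of _ i], rule exI[of _ "i+1"])
  using assms eps_next[OF assms(1,2), of w] perm_pos[OF assms(3) assms(1)] by (auto simp: eps_def)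

lemma eps_inj:
  assumes "w permutes {1..m}" "w' permutes {1..m}" "1 \<le> i" "i \<le> m + 1" "eps m i w = eps m i w'"
  shows "w = w'"
proof
  fix p
  show "w p = w' p"
  proof (cases "p = 0 \<or> m < p")
    case True then have "p \<notin> {1..m}" by auto
    then show ?thesis using permutes_not_in[OF assms(1)] permutes_not_in[OF assms(2)] by simp
  next
    case False
    show ?thesis
    proof (cases "p < i")
      case True
      then have "eps m i w p = eps m i w' p" using assms(5) by simp
      then show ?thesis using True False by (simp add: eps_def)
    next
      case F2: False
      then have "eps m i w (p+1) = eps m i w' (p+1)" using assms(5) by simp
      then show ?thesis using F2 False by (simp add: eps_def)
    qed
  qed
qed

lemma project_stp:
  assumes w: "w permutes {1..m}" and i: "1 \<le> i" "i \<le> m + 1"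
    and st: "stp (m+1) (eps m i w) y" and yi: "y i = 1"
  shows "\<exists>w'. y = eps m i w' \<and> stp m w w'"
proof -
  from st obtain a b where ab: "1 \<le> a" "a < b" "b \<le> m + 1" "y = eps m i w \<circ> Transposition.transpose a b"
    and lt: "eps m i w a < eps m i w b" by (auto simp: stp_def)
  have ai: "a \<noteq> i"
  proof
    assume "a = i" then have "eps m i w b = 1" using yi ab(4) by simp
    then show False using eps_one[OF i w] ab \<open>a = i\<close> by simp
  qed
  have bi: "b \<noteq> i"
  proof
    assume "b = i" then have "eps m i w a = 1" using yi ab(4) by simp
    then show False using eps_one[OF i w] ab \<open>b = i\<close> by simp
  qed
  define a' where "a' = unsh i a"
  define b' where "b' = unsh i b"
  have a'b': "1 \<le> a'" "a' < b'" "b' \<le> m" using ab ai bi i unfolding a'_def b'_def unsh_def by auto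
  have sha: "sh i a' = a" "sh i b' = b" using ai bi i ab unfolding a'_def b'_def unsh_def sh_def by auto
  have yeq: "y = eps m i (w \<circ> Transposition.transpose a' b')"
    using eps_transpose[OF a'b' i, of w] sha ab(4) by simp
  have lt': "w a' < w b'"
    using lt eps_sh[of a' m i w] eps_sh[of b' m i w] a'b' sha by simp
  have st': "stp m w (w \<circ> Transposition.transpose a' b')"
    unfolding stp_def using a'b' lt' by (intro exI[of _ a'] exI[of _ b']) simp
  show ?thesis by (rule exI[of _ "w \<circ> Transposition.transpose a' b'"], rule conjI[OF yeq st'])
qed

lemma proj:
  assumes "(stp (m+1))\<^sup>*\<^sup>* x y" "1 \<le> i" "i \<le> m"
  shows "j \<in> {i,i+1} \<Longrightarrow> x = eps m j w \<Longrightarrow> w permutes {1..m} \<Longrightarrow> y k = 1 \<Longrightarrow> k \<in> {i,i+1}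
    \<Longrightarrow> \<exists>w'. y = eps m k w' \<and> (stp m)\<^sup>*\<^sup>* w w'"
  using assms(1)
proof (induction arbitrary: j w rule: converse_rtranclp_induct)
  case base
  have j: "1 \<le> j" "j \<le> m + 1" using base.prems(1) assms(2,3) by auto
  have "k = j" using eps_one[OF j base.prems(3)] base.prems(2,4) by simp
  then show ?case using base.prems(2) by auto
next
  case (step x z)
  have j: "1 \<le> j" "j \<le> m + 1" using step.prems(1) assms(2,3) by auto
  have xp: "x permutes {1..m+1}" using eps_perm[OF j step.prems(3)] step.prems(2) by simp
  have zp: "z permutes {1..m+1}" using stp_perm[OF step.hyps(1) xp] .
  have yp: "y permutes {1..m+1}" using stps_perm[OF step.hyps(2) zp] .
  have xj: "x j = 1" using step.prems(2) eps_one[OF j step.prems(3)] by simp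
  obtain d where d: "d \<ge> j" "z d = 1"
    using pos_forward[OF r_into_rtranclp[of "stp (m+1)", OF step.hyps(1)] xp xj] by blast
  obtain d' where d': "d' \<ge> d" "y d' = 1"
    using pos_forward[OF step.hyps(2) zp d(2)] by blast
  have "d' = k" using injD[OF permutes_inj[OF yp]] d'(2) step.prems(4) by simp
  then have dk: "j \<le> d" "d \<le> k" using d d' by auto
  show ?case
  proof (cases "d = j")
    case True
    obtain w'' where w'': "z = eps m j w''" "stp m w w''"
      using project_stp[OF step.prems(3) j, of z] step.hyps(1) step.prems(2) d(2) True by blast
    have w''p: "w'' permutes {1..m}" using stp_perm[OF w''(2) step.prems(3)] .
    obtain w' where w': "y = eps m k w'" "(stp m)\<^sup>*\<^sup>* w'' w'"
      using step.IH[OF step.prems(1) w''(1) w''p step.prems(4,5)] by blast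
    have "(stp m)\<^sup>*\<^sup>* w w'" by (rule converse_rtranclp_into_rtranclp[of "stp m", OF w''(2) w'(2)])
    then show ?thesis using w'(1) by blast
  next
    case False
    then have ji: "j = i" "d = i + 1" using dk step.prems(1,5) by auto
    from step.hyps(1) obtain a b where ab: "1 \<le> a" "a < b" "b \<le> m + 1" "z = x \<circ> Transposition.transpose a b"
      by (auto simp: stp_def)
    have "x (Transposition.transpose a b (i+1)) = 1" using d(2) ji ab(4) by simp
    then have "Transposition.transpose a b (i+1) = i"
      using eps_one[OF j step.prems(3)] step.prems(2) ji by simp
    then have "a = i" "b = i + 1" using ab(2) by (auto simp: transpose_def split: if_splits)
    then have "z = eps m (i+1) w" using ab(4) step.prems(2) ji eps_next[OF assms(2,3), of w] by simp
    then show ?thesis using step.IH[of "i+1" w] step.prems(3,4,5) by simp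
  qed
qed

lemma ble_perm: "bruhat_le m a b \<Longrightarrow> a permutes {1..m} \<and> b permutes {1..m}"
  by (simp add: bruhat_le_def)

lemma ble_trans: "bruhat_le m a b \<Longrightarrow> bruhat_le m b c \<Longrightarrow> bruhat_le m a c"
  unfolding bruhat_le_def by (meson rtranclp_trans)

lemma LE:
  assumes w: "w permutes {1..m}" and w': "w' permutes {1..m}" and i: "1 \<le> i" "i \<le> m"
    and jk: "j \<in> {i,i+1}" "k \<in> {i,i+1}"
  shows "bruhat_le (m+1) (eps m j w) (eps m k w') \<longleftrightarrow> bruhat_le m w w' \<and> j \<le> k"
proof
  have j: "1 \<le> j" "j \<le> m + 1" using jk i by auto
  have k: "1 \<le> k" "k \<le> m + 1" using jk i by auto
  assume "bruhat_le (m+1) (eps m j w) (eps m k w')"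
  then have ch: "(stp (m+1))\<^sup>*\<^sup>* (eps m j w) (eps m k w')" by (simp add: bruhat_le_stp)
  obtain w'' where w'': "eps m k w' = eps m k w''" "(stp m)\<^sup>*\<^sup>* w w''"
    using proj[OF ch i jk(1) refl w _ jk(2)] eps_one[OF k w'] by blast
  have "w' = w''" using eps_inj[OF w' stps_perm[OF w''(2) w] k w''(1)] .
  then have "bruhat_le m w w'" using w'' w w' by (simp add: bruhat_le_stp)
  moreover obtain d where "d \<ge> j" "eps m k w' d = 1"
    using pos_forward[OF ch eps_perm[OF j w]] eps_one[OF j w] by blast
  then have "j \<le> k" using eps_one[OF k w'] by simp
  ultimately show "bruhat_le m w w' \<and> j \<le> k" by simp
next
  have j: "1 \<le> j" "j \<le> m + 1" using jk i by auto
  have k: "1 \<le> k" "k \<le> m + 1" using jk i by auto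
  assume a: "bruhat_le m w w' \<and> j \<le> k"
  then have ch: "(stp (m+1))\<^sup>*\<^sup>* (eps m j w) (eps m j w')"
    using lift_stps[OF _ j] by (simp add: bruhat_le_stp)
  have "(stp (m+1))\<^sup>*\<^sup>* (eps m j w) (eps m k w')"
  proof (cases "j = k")
    case True then show ?thesis using ch by simp
  next
    case False
    then have ji: "j = i" "k = i + 1" using a jk by auto
    have ch': "(stp (m+1))\<^sup>*\<^sup>* (eps m i w) (eps m i w')" using ch ji by simp
    show ?thesis
      using rtranclp.rtrancl_into_rtrancl[of "stp (m+1)", OF ch' stp_next[OF i w']] ji by simp
  qed
  then show "bruhat_le (m+1) (eps m j w) (eps m k w')"
    using eps_perm[OF j w] eps_perm[OF k w'] by (simp add: bruhat_le_stp)
qed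

lemma POS:
  assumes u: "u permutes {1..m}" and v: "v permutes {1..m}" and i: "1 \<le> i" "i \<le> m"
    and jk: "j \<in> {i,i+1}" "k \<in> {i,i+1}"
    and l1: "bruhat_le (m+1) (eps m j u) x" and l2: "bruhat_le (m+1) x (eps m k v)"
  shows "\<exists>l w. l \<in> {i,i+1} \<and> j \<le> l \<and> l \<le> k \<and> x = eps m l w \<and> w permutes {1..m}"
proof -
  have j: "1 \<le> j" "j \<le> m + 1" using jk i by auto
  have k: "1 \<le> k" "k \<le> m + 1" using jk i by auto
  have c1: "(stp (m+1))\<^sup>*\<^sup>* (eps m j u) x" and xp: "x permutes {1..m+1}"
    and c2: "(stp (m+1))\<^sup>*\<^sup>* x (eps m k v)"
    using l1 l2 by (auto simp: bruhat_le_stp)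
  obtain d where d: "d \<ge> j" "x d = 1"
    using pos_forward[OF c1 eps_perm[OF j u]] eps_one[OF j u] by blast
  obtain d' where d': "d' \<ge> d" "eps m k v d' = 1"
    using pos_forward[OF c2 xp d(2)] by blast
  have "d' = k" using d'(2) eps_one[OF k v] by simp
  then have dd: "j \<le> d" "d \<le> k" "d \<in> {i,i+1}" using d d' jk by auto
  obtain w where "x = eps m d w" "(stp m)\<^sup>*\<^sup>* u w"
    using proj[OF c1 i jk(1) refl u d(2) dd(3)] by blast
  then show ?thesis using dd stps_perm[OF _ u] by blast
qed

theorem mainTheorem13:
  fixes m i :: nat and u v :: "nat \<Rightarrow> nat"
  assumes uv: "bruhat_le m u v" and i1: "1 \<le> i" and im: "i \<le> m"
  shows "bij_betw (eps m i) (bruhat_interval m u v)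
            (bruhat_interval (m + 1) (eps m i u) (eps m i v))
       \<and> (\<forall>w \<in> bruhat_interval m u v. \<forall>w' \<in> bruhat_interval m u v.
            bruhat_le (m + 1) (eps m i w) (eps m i w') \<longleftrightarrow> bruhat_le m w w')
       \<and> bruhat_interval (m + 1) (eps m i u) (eps m (i + 1) v)
           = bruhat_interval (m + 1) (eps m i u) (eps m i v)
             \<union> bruhat_interval (m + 1) (eps m (i + 1) u) (eps m (i + 1) v)
       \<and> bruhat_interval (m + 1) (eps m i u) (eps m i v)
           \<inter> bruhat_interval (m + 1) (eps m (i + 1) u) (eps m (i + 1) v) = {}
       \<and> (\<forall>w \<in> bruhat_interval m u v. \<forall>w' \<in> bruhat_interval m u v.
            \<forall>j \<in> {i, i + 1}. \<forall>k \<in> {i, i + 1}.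
              bruhat_le (m + 1) (eps m j w) (eps m k w') \<longleftrightarrow> bruhat_le m w w' \<and> j \<le> k)"
proof -
  have i: "1 \<le> i" "i \<le> m" using i1 im .
  have up: "u permutes {1..m}" and vp: "v permutes {1..m}" using ble_perm[OF uv] by auto
  have ii: "i \<in> {i, i+1}" "i + 1 \<in> {i, i+1}" by auto
  have memp: "w permutes {1..m}" if "w \<in> bruhat_interval m u v" for w
    using that ble_perm by (auto simp: bruhat_interval_def)
  have i1': "1 \<le> i" "i \<le> m + 1" using i by auto
  have P5: "\<forall>w \<in> bruhat_interval m u v. \<forall>w' \<in> bruhat_interval m u v.
            \<forall>j \<in> {i, i + 1}. \<forall>k \<in> {i, i + 1}.
              bruhat_le (m + 1) (eps m j w) (eps m k w') \<longleftrightarrow> bruhat_le m w w' \<and> j \<le> k"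
    using LE[OF memp memp i] by blast
  have P2: "\<forall>w \<in> bruhat_interval m u v. \<forall>w' \<in> bruhat_interval m u v.
            bruhat_le (m + 1) (eps m i w) (eps m i w') \<longleftrightarrow> bruhat_le m w w'"
    using P5 ii by auto
  have inj: "inj_on (eps m i) (bruhat_interval m u v)"
    by (rule inj_onI) (use eps_inj[OF memp memp i1'] in blast)
  have img: "eps m i ` bruhat_interval m u v = bruhat_interval (m + 1) (eps m i u) (eps m i v)"
  proof
    show "eps m i ` bruhat_interval m u v \<subseteq> bruhat_interval (m + 1) (eps m i u) (eps m i v)"
    proof
      fix x assume "x \<in> eps m i ` bruhat_interval m u v"
      then obtain w where w: "w \<in> bruhat_interval m u v" "x = eps m i w" by auto
      then have "bruhat_le m u w" "bruhat_le m w v" by (auto simp: bruhat_interval_def)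
      then show "x \<in> bruhat_interval (m + 1) (eps m i u) (eps m i v)"
        using LE[OF up memp[OF w(1)] i ii(1) ii(1)] LE[OF memp[OF w(1)] vp i ii(1) ii(1)] w(2)
        by (simp add: bruhat_interval_def)
    qed
  next
    show "bruhat_interval (m + 1) (eps m i u) (eps m i v) \<subseteq> eps m i ` bruhat_interval m u v"
    proof
      fix x assume "x \<in> bruhat_interval (m + 1) (eps m i u) (eps m i v)"
      then have l1: "bruhat_le (m+1) (eps m i u) x" and l2: "bruhat_le (m+1) x (eps m i v)"
        by (auto simp: bruhat_interval_def)
      obtain l w where lw: "l \<in> {i,i+1}" "i \<le> l" "l \<le> i" "x = eps m l w" "w permutes {1..m}"
        using POS[OF up vp i ii(1) ii(1) l1 l2] by blast
      then have x: "x = eps m i w" by simp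
      have "bruhat_le m u w" using LE[OF up lw(5) i ii(1) ii(1)] l1 x by simp
      moreover have "bruhat_le m w v" using LE[OF lw(5) vp i ii(1) ii(1)] l2 x by simp
      ultimately show "x \<in> eps m i ` bruhat_interval m u v" using x by (auto simp: bruhat_interval_def)
    qed
  qed
  have P3: "bruhat_interval (m + 1) (eps m i u) (eps m (i + 1) v)
           = bruhat_interval (m + 1) (eps m i u) (eps m i v)
             \<union> bruhat_interval (m + 1) (eps m (i + 1) u) (eps m (i + 1) v)"
  proof
    show "bruhat_interval (m + 1) (eps m i u) (eps m (i + 1) v)
      \<subseteq> bruhat_interval (m + 1) (eps m i u) (eps m i v) \<union> bruhat_interval (m + 1) (eps m (i + 1) u) (eps m (i + 1) v)"
    proof
      fix x assume "x \<in> bruhat_interval (m + 1) (eps m i u) (eps m (i + 1) v)"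
      then have l1: "bruhat_le (m+1) (eps m i u) x" and l2: "bruhat_le (m+1) x (eps m (i+1) v)"
        by (auto simp: bruhat_interval_def)
      obtain l w where lw: "l \<in> {i,i+1}" "x = eps m l w" "w permutes {1..m}"
        using POS[OF up vp i ii(1) ii(2) l1 l2] by blast
      have uw: "bruhat_le m u w" using LE[OF up lw(3) i ii(1) lw(1)] l1 lw(2) by simp
      have wv: "bruhat_le m w v" using LE[OF lw(3) vp i lw(1) ii(2)] l2 lw(2) by simp
      have "bruhat_le (m+1) (eps m l u) x" using LE[OF up lw(3) i lw(1) lw(1)] uw lw(2) by simp
      moreover have "bruhat_le (m+1) x (eps m l v)" using LE[OF lw(3) vp i lw(1) lw(1)] wv lw(2) by simp
      ultimately show "x \<in> bruhat_interval (m + 1) (eps m i u) (eps m i v) \<union> bruhat_interval (m + 1) (eps m (i + 1) u) (eps m (i + 1) v)"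
        using lw(1) by (auto simp: bruhat_interval_def)
    qed
  next
    have bu: "bruhat_le m u u" and bv: "bruhat_le m v v" using up vp by (auto simp: bruhat_le_def)
    have a: "bruhat_le (m+1) (eps m i v) (eps m (i+1) v)" using LE[OF vp vp i ii(1) ii(2)] bv by simp
    have b: "bruhat_le (m+1) (eps m i u) (eps m (i+1) u)" using LE[OF up up i ii(1) ii(2)] bu by simp
    show "bruhat_interval (m + 1) (eps m i u) (eps m i v) \<union> bruhat_interval (m + 1) (eps m (i + 1) u) (eps m (i + 1) v)
      \<subseteq> bruhat_interval (m + 1) (eps m i u) (eps m (i + 1) v)"
      using ble_trans[OF _ a] ble_trans[OF b] by (auto simp: bruhat_interval_def)
  qed
  have P4: "bruhat_interval (m + 1) (eps m i u) (eps m i v)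
           \<inter> bruhat_interval (m + 1) (eps m (i + 1) u) (eps m (i + 1) v) = {}"
  proof (rule ccontr)
    assume "\<not> ?thesis"
    then obtain x where "x \<in> bruhat_interval (m + 1) (eps m i u) (eps m i v)"
      "x \<in> bruhat_interval (m + 1) (eps m (i + 1) u) (eps m (i + 1) v)" by blast
    then have l1: "bruhat_le (m+1) (eps m i u) x" and l2: "bruhat_le (m+1) x (eps m i v)"
      and l3: "bruhat_le (m+1) (eps m (i+1) u) x" and l4: "bruhat_le (m+1) x (eps m (i+1) v)"
      by (auto simp: bruhat_interval_def)
    obtain l w where lw: "l \<in> {i,i+1}" "i \<le> l" "l \<le> i" "x = eps m l w" "w permutes {1..m}"
      using POS[OF up vp i ii(1) ii(1) l1 l2] by blast
    obtain l' w' where lw': "l' \<in> {i,i+1}" "i + 1 \<le> l'" "l' \<le> i + 1" "x = eps m l' w'" "w' permutes {1..m}"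
      using POS[OF up vp i ii(2) ii(2) l3 l4] by blast
    have "x i = 1" using lw eps_one[OF i1' lw(5)] by simp
    moreover have "x (i+1) = 1" using lw' eps_one[of "i+1" m w'] i by simp
    moreover have "x (i+1) = 1 \<longleftrightarrow> i + 1 = i" using lw eps_one[OF i1' lw(5)] by simp
    ultimately show False by simp
  qed
  show ?thesis using inj img P2 P3 P4 P5 by (simp add: bij_betw_def)
qed

end
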